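(* Let $\triangle=\{a,b,c\}\subset\mathbb{R}^2$ be three non-collinear points. The three lines each passing through two of the midpoints of the sides of $\mathrm{conv}(\triangle)$ divide the plane into $7$ open connected regions. Then $\mathcal{M}_\triangle$ equals the union of the closures of those of these $7$ regions whose closures contain none of the points $a,b,c$.
   Context: A set $S\subset\mathbb{R}^2$ is in convex position if every point of $S$ lies on the boundary of $\mathrm{conv}(S)$. For a point set $X\subset\mathbb{R}^2$ and a point $O$, $X_O=2O-X$ is the reflection of $X$ in $O$. The point $O$ is an admissible center for $X$ if $X\cup X_O$ is in convex position; $\mathcal{M}_X$ denotes the set of all admissible centers for $X$. *)

theory Defs
  imports "HOL-Analysis.Analysis"
begin

definition convex_position :: "(real^2) set \<Rightarrow> bool" where
  "convex_position S \<longleftrightarrow> S \<subseteq> frontier (convex hull S)"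

definition reflect_set :: "real^2 \<Rightarrow> (real^2) set \<Rightarrow> (real^2) set" where
  "reflect_set O' X = (\<lambda>x. 2 *\<^sub>R O' - x) ` X"

definition admissible_centers :: "(real^2) set \<Rightarrow> (real^2) set" where
  "admissible_centers X = {O'. convex_position (X \<union> reflect_set O' X)}"

definition line_through :: "real^2 \<Rightarrow> real^2 \<Rightarrow> (real^2) set" where
  "line_through p q = affine hull {p, q}"

definition midlines :: "real^2 \<Rightarrow> real^2 \<Rightarrow> real^2 \<Rightarrow> (real^2) set" where
  "midlines a b c =
     (let ma = midpoint b c; mb = midpoint a c; mc = midpoint a b in
      line_through mb mc \<union> line_through mc ma \<union> line_through ma mb)"

end

theory Submission imports Defs begin
definition cr :: "real^2 \<Rightarrow> real^2 \<Rightarrow> real" where "cr x y = x$1*y$2 - x$2*y$1"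
definition bcB :: "real^2 \<Rightarrow> real^2 \<Rightarrow> real^2 \<Rightarrow> real^2 \<Rightarrow> real" where
 "bcB a b c p = cr (p-a) (c-a) / cr (b-a) (c-a)"
definition bcC :: "real^2 \<Rightarrow> real^2 \<Rightarrow> real^2 \<Rightarrow> real^2 \<Rightarrow> real" where
 "bcC a b c p = cr (b-a) (p-a) / cr (b-a) (c-a)"
definition bcA :: "real^2 \<Rightarrow> real^2 \<Rightarrow> real^2 \<Rightarrow> real^2 \<Rightarrow> real" where
 "bcA a b c p = 1 - bcB a b c p - bcC a b c p"

lemma cr0_par1: fixes u v :: "real^2" assumes "cr u v = 0" "u$1 \<noteq> 0"
  shows "v = (v$1/u$1) *\<^sub>R u"
proof -
  have "v$2 = v$1/u$1 * u$2" using assms by (simp add: cr_def field_simps)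
  then show ?thesis using assms by (simp add: vec_eq_iff forall_2)
qed

lemma cr0_par2: fixes u v :: "real^2" assumes "cr u v = 0" "u$2 \<noteq> 0"
  shows "v = (v$2/u$2) *\<^sub>R u"
proof -
  have "v$1 = v$2/u$2 * u$1" using assms by (simp add: cr_def field_simps)
  then show ?thesis using assms by (simp add: vec_eq_iff forall_2)
qed

lemma ncol_cr: assumes "\<not> collinear {a,b,c}" shows "cr (b-a) (c-a) \<noteq> 0"
proof
  assume D: "cr (b-a) (c-a) = 0"
  have "collinear {0, b-a, c-a}"
  proof (cases "b - a = 0")
    case False
    then have "(b-a)$1 \<noteq> 0 \<or> (b-a)$2 \<noteq> 0" by (simp add: vec_eq_iff forall_2)
    then obtain k where "c - a = k *\<^sub>R (b - a)" using cr0_par1[OF D] cr0_par2[OF D] by blast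
    then show ?thesis unfolding collinear_lemma by blast
  qed (simp add: collinear_lemma)
  then have "collinear {b,a,c}" by (subst collinear_3) auto
  then show False using assms by (simp add: insert_commute)
qed

lemma cr_lin1: "cr (x *\<^sub>R u + y *\<^sub>R v) w = x * cr u w + y * cr v w"
  by (simp add: cr_def algebra_simps)
lemma cr_lin2: "cr w (x *\<^sub>R u + y *\<^sub>R v) = x * cr w u + y * cr w v"
  by (simp add: cr_def algebra_simps)
lemma cr_self: "cr u u = 0" by (simp add: cr_def)
lemma cr_anti: "cr u v = - cr v u" by (simp add: cr_def)

lemma cramer_real: fixes pa pb qa qb ra rb :: real
  assumes "pa*qb - pb*qa \<noteq> 0"
  shows "ra = (ra*qb - rb*qa)/(pa*qb - pb*qa) * pa + (pa*rb - pb*ra)/(pa*qb - pb*qa) * qa"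
    "rb = (ra*qb - rb*qa)/(pa*qb - pb*qa) * pb + (pa*rb - pb*ra)/(pa*qb - pb*qa) * qb"
proof -
  define d where "d = pa*qb - pb*qa"
  have d: "d \<noteq> 0" using assms d_def by simp
  have "ra * d = (ra*qb - rb*qa) * pa + (pa*rb - pb*ra) * qa"
       "rb * d = (ra*qb - rb*qa) * pb + (pa*rb - pb*ra) * qb" unfolding d_def by algebra+
  then show "ra = (ra*qb - rb*qa)/(pa*qb - pb*qa) * pa + (pa*rb - pb*ra)/(pa*qb - pb*qa) * qa"
    "rb = (ra*qb - rb*qa)/(pa*qb - pb*qa) * pb + (pa*rb - pb*ra)/(pa*qb - pb*qa) * qb"
    using d unfolding d_def[symmetric] by (simp_all add: divide_simps add_divide_distrib[symmetric])
qed

lemma cramer: fixes u v w :: "real^2" assumes "cr u v \<noteq> 0"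
  shows "w = (cr w v / cr u v) *\<^sub>R u + (cr u w / cr u v) *\<^sub>R v"
  using cramer_real[where pa="u$1" and pb="u$2" and qa="v$1" and qb="v$2" and ra="w$1" and rb="w$2"] assms
  by (simp add: vec_eq_iff forall_2 cr_def)

context
  fixes a b c :: "real^2"
  assumes D: "cr (b-a) (c-a) \<noteq> 0"
begin

lemma bc_rep: "p = bcA a b c p *\<^sub>R a + bcB a b c p *\<^sub>R b + bcC a b c p *\<^sub>R c"
proof -
  have "p - a = bcB a b c p *\<^sub>R (b - a) + bcC a b c p *\<^sub>R (c - a)"
    unfolding bcB_def bcC_def by (rule cramer[OF D])
  then show ?thesis unfolding bcA_def by (simp add: algebra_simps)
qed

lemma bc_uniq: assumes "x + y + z = 1" "p = x *\<^sub>R a + y *\<^sub>R b + z *\<^sub>R c"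
  shows "bcA a b c p = x \<and> bcB a b c p = y \<and> bcC a b c p = z"
proof -
  have x: "x = 1 - y - z" using assms(1) by simp
  have pa: "p - a = y *\<^sub>R (b-a) + z *\<^sub>R (c-a)"
    unfolding assms(2) x by (simp add: algebra_simps)
  have "bcB a b c p = y" "bcC a b c p = z"
    using D unfolding bcB_def bcC_def pa cr_lin1 cr_lin2 cr_self
    by (simp_all add: cr_anti[of "c-a" "b-a"] field_simps)
  then show ?thesis using x by (simp add: bcA_def)
qed

lemma bc_sum: "bcA a b c p + bcB a b c p + bcC a b c p = 1"
  by (simp add: bcA_def)

lemma comb_lemma: "u *\<^sub>R (A1 *\<^sub>R a + B1 *\<^sub>R b + C1 *\<^sub>R c) + v *\<^sub>R (A2 *\<^sub>R a + B2 *\<^sub>R b + C2 *\<^sub>R c)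
   = (u * A1 + v * A2) *\<^sub>R a + (u * B1 + v * B2) *\<^sub>R b + (u * C1 + v * C2) *\<^sub>R c"
  by (simp add: algebra_simps)

lemma bc_aff: assumes "u + v = 1"
  shows "bcA a b c (u *\<^sub>R p + v *\<^sub>R q) = u * bcA a b c p + v * bcA a b c q"
    "bcB a b c (u *\<^sub>R p + v *\<^sub>R q) = u * bcB a b c p + v * bcB a b c q"
    "bcC a b c (u *\<^sub>R p + v *\<^sub>R q) = u * bcC a b c p + v * bcC a b c q"
proof -
  have e: "u *\<^sub>R p + v *\<^sub>R q = (u * bcA a b c p + v * bcA a b c q) *\<^sub>R a
     + (u * bcB a b c p + v * bcB a b c q) *\<^sub>R b + (u * bcC a b c p + v * bcC a b c q) *\<^sub>R c"
    unfolding comb_lemma[symmetric] by (simp only: bc_rep[symmetric])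
  have s: "(u * bcA a b c p + v * bcA a b c q) + (u * bcB a b c p + v * bcB a b c q)
     + (u * bcC a b c p + v * bcC a b c q) = 1"
    using bc_sum[of p] bc_sum[of q] assms
    by (metis (no_types, lifting) add.assoc add.left_commute distrib_left mult.right_neutral)
  show "bcA a b c (u *\<^sub>R p + v *\<^sub>R q) = u * bcA a b c p + v * bcA a b c q"
    "bcB a b c (u *\<^sub>R p + v *\<^sub>R q) = u * bcB a b c p + v * bcB a b c q"
    "bcC a b c (u *\<^sub>R p + v *\<^sub>R q) = u * bcC a b c p + v * bcC a b c q"
    using bc_uniq[OF s e] by auto
qed

lemma bc_a: "bcA a b c a = 1" "bcB a b c a = 0" "bcC a b c a = 0"
  using bc_uniq[of 1 0 0 a] by auto
lemma bc_b: "bcA a b c b = 0" "bcB a b c b = 1" "bcC a b c b = 0"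
  using bc_uniq[of 0 1 0 b] by auto
lemma bc_c: "bcA a b c c = 0" "bcB a b c c = 0" "bcC a b c c = 1"
  using bc_uniq[of 0 0 1 c] by auto

end

lemma cont_bc: "continuous_on UNIV (bcA a b c)" "continuous_on UNIV (bcB a b c)"
   "continuous_on UNIV (bcC a b c)"
  by (auto simp: bcA_def bcB_def bcC_def cr_def divide_inverse intro!: continuous_intros)


lemma components_partition:
  assumes U: "\<Union>F = U" and F: "\<And>C. C \<in> F \<Longrightarrow> open C \<and> connected C \<and> C \<noteq> {}"
    and disj: "\<And>C C'. C \<in> F \<Longrightarrow> C' \<in> F \<Longrightarrow> C \<noteq> C' \<Longrightarrow> C \<inter> C' = {}"
  shows "components U = F"
proof -
  have inF: "C \<in> components U" if C: "C \<in> F" for C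
  proof -
    have CU: "C \<subseteq> U" using U C by blast
    obtain K where K: "K \<in> components U" "C \<subseteq> K"
      using exists_component_superset[OF CU] F[OF C] CU by blast
    have KU: "K \<subseteq> U" using K in_components_subset by blast
    have oV: "open (\<Union>(F - {C}))" using F by blast
    have "C \<inter> \<Union>(F - {C}) \<inter> K = {}" using disj[OF C] by blast
    moreover have "K \<subseteq> C \<union> \<Union>(F - {C})" using KU U by blast
    moreover have "C \<inter> K \<noteq> {}" using K F[OF C] by blast
    ultimately have "C \<inter> K = {} \<or> \<Union>(F - {C}) \<inter> K = {}"
      by (intro connectedD[OF in_components_connected[OF K(1)]]) (use F[OF C] oV in auto)
    then have "\<Union>(F - {C}) \<inter> K = {}" using \<open>C \<inter> K \<noteq> {}\<close> by blast
    then have "K \<subseteq> C" using \<open>K \<subseteq> C \<union> \<Union>(F - {C})\<close> by blast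
    then show ?thesis using K by auto
  qed
  have "K \<in> F" if K: "K \<in> components U" for K
  proof -
    obtain x where x: "x \<in> K" using in_components_nonempty[OF K] by blast
    then have "x \<in> U" using in_components_subset[OF K] by blast
    then obtain C where C: "C \<in> F" "x \<in> C" using U by blast
    then have "K = C" using components_eq[OF K inF[OF C(1)]] x by blast
    then show ?thesis using C by simp
  qed
  then show ?thesis using inF by blast
qed

lemma frontier_support:
  fixes g :: "real^2 \<Rightarrow> real"
  assumes aff: "\<And>x y u v. u + v = 1 \<Longrightarrow> g (u *\<^sub>R x + v *\<^sub>R y) = u * g x + v * g y"
    and p: "p \<in> S" and le: "\<And>q. q \<in> S \<Longrightarrow> g q \<le> g p"
    and dir: "\<And>t. t > 0 \<Longrightarrow> g (p + t *\<^sub>R e) > g p"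
  shows "p \<in> frontier (convex hull S)"
proof -
  have cvx: "convex {q. g q \<le> g p}"
  proof (rule convexI)
    fix x y :: "real^2" and u v :: real
    assume "x \<in> {q. g q \<le> g p}" "y \<in> {q. g q \<le> g p}" and uv: "0 \<le> u" "0 \<le> v" "u + v = 1"
    then have "g x \<le> g p" "g y \<le> g p" by auto
    then have "u * g x + v * g y \<le> u * g p + v * g p"
      using uv by (intro add_mono mult_left_mono) auto
    also have "u * g p + v * g p = g p" using uv(3)
      by (metis distrib_right mult_1)
    finally show "u *\<^sub>R x + v *\<^sub>R y \<in> {q. g q \<le> g p}" using aff[OF uv(3)] by simp
  qed
  have sub: "convex hull S \<subseteq> {q. g q \<le> g p}"
    using le cvx by (intro hull_minimal) auto
  have cl: "p \<in> closure (convex hull S)"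
    using p by (meson hull_inc closure_subset subsetD)
  have "p \<notin> interior (convex hull S)"
  proof
    assume "p \<in> interior (convex hull S)"
    then obtain r where r: "r > 0" "ball p r \<subseteq> convex hull S"
      using mem_interior by blast
    define t where "t = r / (2 * (norm e + 1))"
    have n: "norm e + 1 > 0" by (metis norm_ge_zero add_nonneg_pos zero_less_one)
    have t: "t > 0" unfolding t_def using r n by simp
    have "t * norm e < r"
    proof -
      have "t * norm e \<le> t * (norm e + 1)" using t by simp
      also have "\<dots> = r / 2" using n unfolding t_def by (simp add: field_simps)
      finally show ?thesis using r by simp
    qed
    then have "p + t *\<^sub>R e \<in> ball p r" using t by (simp add: dist_norm)
    then have "g (p + t *\<^sub>R e) \<le> g p" using r sub by blast
    then show False using dir[OF t] by simp
  qed
  then show ?thesis using cl by (simp add: frontier_def)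
qed


lemma closure_seg:
  fixes p q :: "real^2"
  assumes "\<And>t. 0 < t \<Longrightarrow> t \<le> 1 \<Longrightarrow> (1 - t) *\<^sub>R p + t *\<^sub>R q \<in> S"
  shows "p \<in> closure S"
  unfolding closure_approachable
proof (intro allI impI)
  fix e :: real assume e: "e > 0"
  define n where "n = norm (q - p)"
  have n: "n \<ge> 0" "n + 1 > 0" unfolding n_def by (auto simp: add_nonneg_pos)
  define t where "t = min 1 (e / (2 * (n + 1)))"
  have t: "0 < t" "t \<le> 1" unfolding t_def using e n by auto
  have eq: "(1 - t) *\<^sub>R p + t *\<^sub>R q = p + t *\<^sub>R (q - p)" by (simp add: algebra_simps)
  have "dist ((1 - t) *\<^sub>R p + t *\<^sub>R q) p = t * n"
    unfolding eq n_def using t by (simp add: dist_norm)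
  also have "t * n \<le> (e / (2 * (n + 1))) * n"
    using t n unfolding t_def by (intro mult_right_mono) auto
  also have "\<dots> < e"
  proof -
    have "(e / (2 * (n + 1))) * n = e * (n / (2 * (n + 1)))" by simp
    also have "\<dots> < e * 1"
      using e n by (intro mult_strict_left_mono) (auto simp: field_simps)
    finally show ?thesis by simp
  qed
  finally show "\<exists>y\<in>S. dist y p < e" using assms[OF t] by blast
qed

definition sg :: "bool \<Rightarrow> real \<Rightarrow> bool" where
  "sg s x = (if s then x > 1/2 else x < 1/2)"
definition csg :: "bool \<Rightarrow> real \<Rightarrow> bool" where
  "csg s x = (if s then x \<ge> 1/2 else x \<le> 1/2)"

definition reg :: "real^2 \<Rightarrow> real^2 \<Rightarrow> real^2 \<Rightarrow> bool \<Rightarrow> bool \<Rightarrow> bool \<Rightarrow> (real^2) set" where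
  "reg a b c s1 s2 s3 = {p. sg s1 (bcA a b c p) \<and> sg s2 (bcB a b c p) \<and> sg s3 (bcC a b c p)}"
definition creg :: "real^2 \<Rightarrow> real^2 \<Rightarrow> real^2 \<Rightarrow> bool \<Rightarrow> bool \<Rightarrow> bool \<Rightarrow> (real^2) set" where
  "creg a b c s1 s2 s3 = {p. csg s1 (bcA a b c p) \<and> csg s2 (bcB a b c p) \<and> csg s3 (bcC a b c p)}"

lemma open_sg: assumes "continuous_on UNIV f" shows "open {p. sg s (f p)}"
  using assms by (cases s) (auto simp: sg_def intro!: open_Collect_less continuous_intros)
lemma closed_csg: assumes "continuous_on UNIV f" shows "closed {p. csg s (f p)}"
  using assms by (cases s) (auto simp: csg_def intro!: closed_Collect_le continuous_intros)

lemma sg_comb: assumes "0 \<le> u" "0 \<le> v" "u + v = 1" "sg s x" "sg s y"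
  shows "sg s (u * x + v * y)"
proof (cases "u = 0")
  case True then show ?thesis using assms by simp
next
  case False
  then have u: "u > 0" using assms by simp
  have e: "u * x + v * y - 1/2 = u * (x - 1/2) + v * (y - 1/2)" using assms(3)
    by (simp add: algebra_simps)
  show ?thesis
  proof (cases s)
    case True
    then have "u * (x - 1/2) > 0" "v * (y - 1/2) \<ge> 0" using assms u by (auto simp: sg_def)
    then show ?thesis using e True by (simp add: sg_def)
  next
    case False
    then have "u * (x - 1/2) < 0" "v * (y - 1/2) \<le> 0" using assms u
      by (auto simp: sg_def mult_pos_neg mult_nonneg_nonpos)
    then show ?thesis using e False by (simp add: sg_def)
  qed
qed

lemma csg_comb: assumes "0 < t" "t \<le> 1" "csg s x" "sg s y"
  shows "sg s ((1 - t) * x + t * y)"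
proof -
  have e: "(1 - t) * x + t * y - 1/2 = (1 - t) * (x - 1/2) + t * (y - 1/2)"
    by (simp add: field_simps)
  show ?thesis
  proof (cases s)
    case True
    then have "(1 - t) * (x - 1/2) \<ge> 0" "t * (y - 1/2) > 0" using assms by (auto simp: sg_def csg_def)
    then show ?thesis using e True by (simp add: sg_def)
  next
    case False
    then have "(1 - t) * (x - 1/2) \<le> 0" "t * (y - 1/2) < 0" using assms
      by (auto simp: sg_def csg_def mult_pos_neg mult_nonneg_nonpos)
    then show ?thesis using e False by (simp add: sg_def)
  qed
qed

lemma sg_csg: "sg s x \<Longrightarrow> csg s x" by (cases s) (auto simp: sg_def csg_def)
lemma sg_unique: "sg s x \<Longrightarrow> sg s' x \<Longrightarrow> s = s'" by (cases s; cases s') (auto simp: sg_def)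


lemma bc_rot: assumes "\<not> collinear {a,b,c}"
  shows "bcA b c a p = bcB a b c p \<and> bcB b c a p = bcC a b c p \<and> bcC b c a p = bcA a b c p"
proof -
  have D: "cr (c-b) (a-b) \<noteq> 0"
    using ncol_cr[of b c a] assms by (simp add: insert_commute)
  have D0: "cr (b-a) (c-a) \<noteq> 0" using ncol_cr[OF assms] .
  have e: "p = bcB a b c p *\<^sub>R b + bcC a b c p *\<^sub>R c + bcA a b c p *\<^sub>R a"
    using bc_rep[OF D0, of p] by (simp add: algebra_simps)
  have s: "bcB a b c p + bcC a b c p + bcA a b c p = 1" by (simp add: bcA_def)
  show ?thesis using bc_uniq[OF D s e] by auto
qed

lemma midline_eq: assumes "\<not> collinear {a,b,c}"
  shows "line_through (midpoint a c) (midpoint a b) = {p. bcA a b c p = 1/2}"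
proof -
  have D: "cr (b-a) (c-a) \<noteq> 0" using ncol_cr[OF assms] .
  show ?thesis
    unfolding line_through_def affine_hull_2
  proof (intro equalityI subsetI)
    fix p assume "p \<in> {u *\<^sub>R midpoint a c + v *\<^sub>R midpoint a b |u v. u + v = 1}"
    then obtain u v where uv: "u + v = 1" "p = u *\<^sub>R midpoint a c + v *\<^sub>R midpoint a b" by blast
    have e: "p = (1/2) *\<^sub>R a + (v/2) *\<^sub>R b + (u/2) *\<^sub>R c"
      unfolding uv(2) midpoint_def using uv(1)
      by (simp add: algebra_simps) (metis scaleR_add_left scaleR_one add_divide_distrib)
    have s: "1/2 + v/2 + u/2 = (1::real)" using uv(1) by (simp add: field_simps)
    show "p \<in> {p. bcA a b c p = 1/2}" using bc_uniq[OF D s e] by simp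
  next
    fix p assume "p \<in> {p. bcA a b c p = 1/2}"
    then have A: "bcA a b c p = 1/2" by simp
    have s: "bcB a b c p + bcC a b c p = 1/2" using A by (simp add: bcA_def)
    have "p = (2 * bcC a b c p) *\<^sub>R midpoint a c + (2 * bcB a b c p) *\<^sub>R midpoint a b"
    proof -
      have "(2 * bcC a b c p) *\<^sub>R midpoint a c + (2 * bcB a b c p) *\<^sub>R midpoint a b
          = (bcB a b c p + bcC a b c p) *\<^sub>R a + bcB a b c p *\<^sub>R b + bcC a b c p *\<^sub>R c"
        unfolding midpoint_def by (simp add: algebra_simps)
      also have "\<dots> = p"
      proof -
        have s': "bcB a b c p + bcC a b c p = bcA a b c p" using s A by simp
        show ?thesis by (simp only: s') (rule bc_rep[OF D, symmetric])
      qed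
      finally show ?thesis by simp
    qed
    moreover have "2 * bcC a b c p + 2 * bcB a b c p = 1" using s by simp
    ultimately show "p \<in> {u *\<^sub>R midpoint a c + v *\<^sub>R midpoint a b |u v. u + v = 1}" by blast
  qed
qed

lemma midlines_eq: assumes "\<not> collinear {a,b,c}"
  shows "midlines a b c = {p. bcA a b c p = 1/2 \<or> bcB a b c p = 1/2 \<or> bcC a b c p = 1/2}"
proof -
  have n2: "\<not> collinear {b,c,a}" using assms by (simp add: insert_commute)
  have n3: "\<not> collinear {c,a,b}" using assms by (simp add: insert_commute)
  have l1: "line_through (midpoint a c) (midpoint a b) = {p. bcA a b c p = 1/2}"
    by (rule midline_eq[OF assms])
  have l2: "line_through (midpoint a b) (midpoint b c) = {p. bcB a b c p = 1/2}"
    using midline_eq[OF n2] bc_rot[OF assms] by (simp add: midpoint_sym)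
  have l3: "line_through (midpoint b c) (midpoint a c) = {p. bcC a b c p = 1/2}"
    using midline_eq[OF n3] bc_rot[OF assms] bc_rot[OF n2] by (simp add: midpoint_sym)
  show ?thesis unfolding midlines_def Let_def l1 l2 l3 by auto
qed


lemma cont_bc': "continuous_on S (\<lambda>q. bcA a b c q)" "continuous_on S (\<lambda>q. bcB a b c q)"
   "continuous_on S (\<lambda>q. bcC a b c q)"
  using cont_bc[of a b c] by (auto intro: continuous_on_subset)

lemma xy_exists:
  fixes \<alpha> \<beta> \<gamma> :: real
  assumes "\<alpha> + \<beta> + \<gamma> = 1" "\<not> (\<alpha> > 1/2 \<and> \<beta> < 1/2 \<and> \<gamma> < 1/2)"
  shows "\<exists>x y. x \<ge> 0 \<and> y \<ge> 0 \<and> x + y > 0 \<and> \<beta> * x + \<gamma> * y \<ge> 0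
     \<and> x - 2 * (\<beta> * x) - 2 * (\<gamma> * y) \<le> 0 \<and> y - 2 * (\<gamma> * y) - 2 * (\<beta> * x) \<le> 0"
proof (cases "\<beta> \<ge> 1/2")
  case True
  then show ?thesis by (intro exI[of _ 1] exI[of _ 0]) auto
next
  case nb: False
  show ?thesis
  proof (cases "\<gamma> \<ge> 1/2")
    case True
    then show ?thesis by (intro exI[of _ 0] exI[of _ 1]) auto
  next
    case False
    then have h: "\<alpha> \<le> 1/2" "\<beta> < 1/2" "\<gamma> < 1/2" using assms nb by auto
    have e1: "\<beta> * (2 * \<gamma>) + \<gamma> * (1 - 2 * \<beta>) = \<gamma>" by (simp add: algebra_simps)
    have e2: "2 * \<gamma> - 2 * (\<beta> * (2 * \<gamma>)) - 2 * (\<gamma> * (1 - 2 * \<beta>)) = 0" by (simp add: algebra_simps)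
    have e3: "(1 - 2 * \<beta>) - 2 * (\<gamma> * (1 - 2 * \<beta>)) - 2 * (\<beta> * (2 * \<gamma>)) = 1 - 2 * \<beta> - 2 * \<gamma>"
      by (simp add: algebra_simps)
    show ?thesis
      by (intro exI[of _ "2 * \<gamma>"] exI[of _ "1 - 2 * \<beta>"]) (use h assms e1 e2 e3 in auto)
  qed
qed

lemma refl_set3: "reflect_set O' {a,b,c} = {2 *\<^sub>R O' - a, 2 *\<^sub>R O' - b, 2 *\<^sub>R O' - c}"
  by (simp add: reflect_set_def)

lemma lem_fr:
  assumes ncol: "\<not> collinear {a,b,c}" and O: "O' = \<alpha> *\<^sub>R a + \<beta> *\<^sub>R b + \<gamma> *\<^sub>R c"
    and s: "\<alpha> + \<beta> + \<gamma> = 1" and nv: "\<not> (\<alpha> > 1/2 \<and> \<beta> < 1/2 \<and> \<gamma> < 1/2)"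
  shows "a \<in> frontier (convex hull ({a,b,c} \<union> reflect_set O' {a,b,c}))"
    "2 *\<^sub>R O' - a \<in> frontier (convex hull ({a,b,c} \<union> reflect_set O' {a,b,c}))"
proof -
  define S where "S = {a,b,c} \<union> reflect_set O' {a,b,c}"
  have D: "cr (b-a) (c-a) \<noteq> 0" using ncol_cr[OF ncol] .
  obtain x y where xy: "x \<ge> 0" "y \<ge> 0" "x + y > 0" "\<beta> * x + \<gamma> * y \<ge> 0"
     "x - 2 * (\<beta> * x) - 2 * (\<gamma> * y) \<le> 0" "y - 2 * (\<gamma> * y) - 2 * (\<beta> * x) \<le> 0"
    using xy_exists[OF s nv] by blast
  define f where "f q = - (x * bcB a b c q + y * bcC a b c q)" for q
  have faff: "f (u *\<^sub>R p + v *\<^sub>R q) = u * f p + v * f q" if "u + v = 1" for u v p q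
    unfolding f_def bc_aff[OF D that] by (simp add: algebra_simps)
  have fa: "f a = 0" unfolding f_def using bc_a[OF D] by simp
  have fb: "f b = - x" unfolding f_def using bc_b[OF D] by simp
  have fc: "f c = - y" unfolding f_def using bc_c[OF D] by simp
  have fO: "f O' = - (\<beta> * x + \<gamma> * y)" unfolding f_def using bc_uniq[OF D s O] by (simp add: mult.commute)
  have frefl: "f (2 *\<^sub>R O' - q) = 2 * f O' - f q" for q
  proof -
    have "2 *\<^sub>R O' - q = 2 *\<^sub>R O' + (-1) *\<^sub>R q" by simp
    then show ?thesis using faff[of 2 "-1" O' q] by simp
  qed
  have Sr: "2 *\<^sub>R O' - q \<in> S" if "q \<in> S" for q
    using that unfolding S_def refl_set3 by auto
  have fle: "f q \<le> 0" if "q \<in> S" for q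
    using that xy unfolding S_def refl_set3 by (auto simp: frefl fa fb fc fO)
  have dir: "f (a + t *\<^sub>R (2 *\<^sub>R a - b - c)) > 0" if t: "t > 0" for t
  proof -
    have e: "a + t *\<^sub>R (2 *\<^sub>R a - b - c) = (1 + 2 * t) *\<^sub>R a + (- t) *\<^sub>R b + (- t) *\<^sub>R c"
      by (simp add: algebra_simps)
    have s': "(1 + 2 * t) + (- t) + (- t) = 1" by simp
    have "f (a + t *\<^sub>R (2 *\<^sub>R a - b - c)) = t * (x + y)"
      unfolding f_def e using bc_uniq[OF D s' refl] by (simp add: algebra_simps)
    then show ?thesis using t xy by simp
  qed
  show "a \<in> frontier (convex hull ({a,b,c} \<union> reflect_set O' {a,b,c}))"
    unfolding S_def[symmetric]
    by (rule frontier_support[where g = f and e = "2 *\<^sub>R a - b - c"])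
       (use faff fle dir fa in \<open>auto simp: S_def\<close>)
  define g where "g q = f (2 *\<^sub>R O' - q)" for q
  have gaff: "g (u *\<^sub>R p + v *\<^sub>R q) = u * g p + v * g q" if uv: "u + v = 1" for u v p q
  proof -
    have "u *\<^sub>R (2 *\<^sub>R O' - p) + v *\<^sub>R (2 *\<^sub>R O' - q) = (u + v) *\<^sub>R (2 *\<^sub>R O') - (u *\<^sub>R p + v *\<^sub>R q)"
      by (simp add: algebra_simps)
    then have "2 *\<^sub>R O' - (u *\<^sub>R p + v *\<^sub>R q) = u *\<^sub>R (2 *\<^sub>R O' - p) + v *\<^sub>R (2 *\<^sub>R O' - q)"
      using uv by simp
    then show ?thesis unfolding g_def using faff[OF uv] by simp
  qed
  have gle: "g q \<le> g (2 *\<^sub>R O' - a)" if "q \<in> S" for q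
    unfolding g_def using fle[OF Sr[OF that]] fa by simp
  have gdir: "g (2 *\<^sub>R O' - a + t *\<^sub>R (- (2 *\<^sub>R a - b - c))) > g (2 *\<^sub>R O' - a)" if t: "t > 0" for t
  proof -
    have "2 *\<^sub>R O' - (2 *\<^sub>R O' - a + t *\<^sub>R (- (2 *\<^sub>R a - b - c))) = a + t *\<^sub>R (2 *\<^sub>R a - b - c)"
      by (simp add: algebra_simps)
    then show ?thesis unfolding g_def using dir[OF t] fa by simp
  qed
  have aS: "2 *\<^sub>R O' - a \<in> S" unfolding S_def refl_set3 by simp
  show "2 *\<^sub>R O' - a \<in> frontier (convex hull ({a,b,c} \<union> reflect_set O' {a,b,c}))"
    unfolding S_def[symmetric]
    by (rule frontier_support[where g = g and e = "- (2 *\<^sub>R a - b - c)"])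
       (use gaff gle gdir aS in auto)
qed


lemma int_ident_real:
  fixes \<alpha> \<beta> \<gamma> A B C t0 a1 b1 c1 :: real
  assumes "\<alpha> \<noteq> 0"
  shows "(B + A * t0 / (2 * \<alpha>) - \<beta> * A / \<alpha>) * b1 + (C + A * (1 - t0) / (2 * \<alpha>) - \<gamma> * A / \<alpha>) * c1
    + (A / (2 * \<alpha>)) * (t0 * (2 * (\<alpha> * a1 + \<beta> * b1 + \<gamma> * c1) - b1)
       + (1 - t0) * (2 * (\<alpha> * a1 + \<beta> * b1 + \<gamma> * c1) - c1)) = A * a1 + B * b1 + C * c1"
  using assms by (simp add: field_simps)

lemma int_ident:
  fixes a b c :: "real^2"
  assumes "\<alpha> \<noteq> 0"
  shows "(B + A * t0 / (2 * \<alpha>) - \<beta> * A / \<alpha>) *\<^sub>R b + (C + A * (1 - t0) / (2 * \<alpha>) - \<gamma> * A / \<alpha>) *\<^sub>R c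
    + (A / (2 * \<alpha>)) *\<^sub>R (t0 *\<^sub>R (2 *\<^sub>R (\<alpha> *\<^sub>R a + \<beta> *\<^sub>R b + \<gamma> *\<^sub>R c) - b)
       + (1 - t0) *\<^sub>R (2 *\<^sub>R (\<alpha> *\<^sub>R a + \<beta> *\<^sub>R b + \<gamma> *\<^sub>R c) - c)) = A *\<^sub>R a + B *\<^sub>R b + C *\<^sub>R c"
  using int_ident_real[OF assms, of B A t0 \<beta> "b$1" C \<gamma> "c$1" "a$1"]
    int_ident_real[OF assms, of B A t0 \<beta> "b$2" C \<gamma> "c$2" "a$2"]
  by (simp add: vec_eq_iff forall_2)

lemma lem_int:
  assumes ncol: "\<not> collinear {a,b,c}" and O: "O' = \<alpha> *\<^sub>R a + \<beta> *\<^sub>R b + \<gamma> *\<^sub>R c"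
    and s: "\<alpha> + \<beta> + \<gamma> = 1" and v: "\<alpha> > 1/2" "\<beta> < 1/2" "\<gamma> < 1/2"
  shows "a \<in> interior (convex hull ({a,b,c} \<union> reflect_set O' {a,b,c}))"
proof -
  define S where "S = {a,b,c} \<union> reflect_set O' {a,b,c}"
  have D: "cr (b-a) (c-a) \<noteq> 0" using ncol_cr[OF ncol] .
  have al: "\<alpha> > 0" "\<alpha> \<noteq> 0" using v by auto
  define bp where "bp = max \<beta> 0"
  define gp where "gp = max \<gamma> 0"
  define t0 where "t0 = 1/2 + bp - gp"
  have t0: "0 \<le> t0" "t0 \<le> 1" unfolding t0_def bp_def gp_def using v by auto
  have t0b: "t0 - 2 * \<beta> > 0" "1 - t0 - 2 * \<gamma> > 0"
    unfolding t0_def bp_def gp_def using v s by auto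
  define Q where "Q = t0 *\<^sub>R (2 *\<^sub>R O' - b) + (1 - t0) *\<^sub>R (2 *\<^sub>R O' - c)"
  have QS: "Q \<in> convex hull S"
  proof -
    have "2 *\<^sub>R O' - b \<in> convex hull S" "2 *\<^sub>R O' - c \<in> convex hull S"
      unfolding S_def refl_set3 by (auto intro: hull_inc)
    then show ?thesis unfolding Q_def using t0
      by (intro convexD[OF convex_convex_hull]) auto
  qed
  define l1 where "l1 q = bcB a b c q + bcA a b c q * t0 / (2 * \<alpha>) - \<beta> * bcA a b c q / \<alpha>" for q
  define l2 where "l2 q = bcC a b c q + bcA a b c q * (1 - t0) / (2 * \<alpha>) - \<gamma> * bcA a b c q / \<alpha>" for q
  define m where "m q = bcA a b c q / (2 * \<alpha>)" for q
  define U where "U = {q. 0 < l1 q} \<inter> {q. 0 < l2 q} \<inter> {q. 0 < m q}"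
  have oU: "open U" unfolding U_def l1_def l2_def m_def
    using al by (intro open_Int open_Collect_less continuous_intros cont_bc') auto
  have aU: "a \<in> U"
  proof -
    have "l1 a = (t0 - 2 * \<beta>) / (2 * \<alpha>)" unfolding l1_def using bc_a[OF D] al
      by (simp add: field_simps)
    moreover have "l2 a = (1 - t0 - 2 * \<gamma>) / (2 * \<alpha>)" unfolding l2_def using bc_a[OF D] al
      by (simp add: field_simps)
    moreover have "m a = 1 / (2 * \<alpha>)" unfolding m_def using bc_a[OF D] by simp
    ultimately show ?thesis unfolding U_def using t0b al by auto
  qed
  have US: "U \<subseteq> convex hull S"
  proof
    fix q assume q: "q \<in> U"
    have id: "l1 q *\<^sub>R b + l2 q *\<^sub>R c + m q *\<^sub>R Q = q"
    proof -
      have "l1 q *\<^sub>R b + l2 q *\<^sub>R c + m q *\<^sub>R Q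
          = bcA a b c q *\<^sub>R a + bcB a b c q *\<^sub>R b + bcC a b c q *\<^sub>R c"
        unfolding l1_def l2_def m_def Q_def O by (rule int_ident[OF al(2)])
      also have "\<dots> = q" by (rule bc_rep[OF D, symmetric])
      finally show ?thesis .
    qed
    have sum: "l1 q + l2 q + m q = 1"
    proof -
      have "l1 q + l2 q + m q = bcB a b c q + bcC a b c q + bcA a b c q * (1 - \<beta> - \<gamma>) / \<alpha>"
        unfolding l1_def l2_def m_def using al by (simp add: field_simps)
      also have "1 - \<beta> - \<gamma> = \<alpha>" using s by simp
      finally show ?thesis using al by (simp add: bcA_def)
    qed
    have "q \<in> convex hull {b, c, Q}"
      unfolding convex_hull_3 using q sum id unfolding U_def
      by (intro CollectI exI[of _ "l1 q"] exI[of _ "l2 q"] exI[of _ "m q"]) auto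
    moreover have "convex hull {b, c, Q} \<subseteq> convex hull S"
      using QS by (intro hull_minimal) (auto simp: S_def intro: hull_inc)
    ultimately show "q \<in> convex hull S" by blast
  qed
  show ?thesis unfolding S_def[symmetric]
    using interior_maximal[OF US oU] aU by blast
qed


lemma cp_char:
  assumes ncol: "\<not> collinear {a,b,c}"
  shows "convex_position ({a,b,c} \<union> reflect_set O' {a,b,c}) \<longleftrightarrow>
    \<not> (bcA a b c O' > 1/2 \<and> bcB a b c O' < 1/2 \<and> bcC a b c O' < 1/2) \<and>
    \<not> (bcB a b c O' > 1/2 \<and> bcC a b c O' < 1/2 \<and> bcA a b c O' < 1/2) \<and>
    \<not> (bcC a b c O' > 1/2 \<and> bcA a b c O' < 1/2 \<and> bcB a b c O' < 1/2)"
proof -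
  define A where "A = bcA a b c O'"
  define B where "B = bcB a b c O'"
  define C where "C = bcC a b c O'"
  have D: "cr (b-a) (c-a) \<noteq> 0" using ncol_cr[OF ncol] .
  have r1: "O' = A *\<^sub>R a + B *\<^sub>R b + C *\<^sub>R c" unfolding A_def B_def C_def by (rule bc_rep[OF D])
  have r2: "O' = B *\<^sub>R b + C *\<^sub>R c + A *\<^sub>R a" using r1 by (simp add: algebra_simps)
  have r3: "O' = C *\<^sub>R c + A *\<^sub>R a + B *\<^sub>R b" using r1 by (simp add: algebra_simps)
  have s1: "A + B + C = 1" unfolding A_def B_def C_def by (simp add: bcA_def)
  have s2: "B + C + A = 1" using s1 by simp
  have s3: "C + A + B = 1" using s1 by simp
  have n2: "\<not> collinear {b,c,a}" using ncol by (simp add: insert_commute)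
  have n3: "\<not> collinear {c,a,b}" using ncol by (simp add: insert_commute)
  define S where "S = {a,b,c} \<union> reflect_set O' {a,b,c}"
  have S2: "{b,c,a} \<union> reflect_set O' {b,c,a} = S" unfolding S_def by (simp add: insert_commute)
  have S3: "{c,a,b} \<union> reflect_set O' {c,a,b} = S" unfolding S_def by (simp add: insert_commute)
  have notfr: "p \<notin> frontier (convex hull S)" if "p \<in> interior (convex hull S)" for p
    using that by (simp add: frontier_def)
  show ?thesis
    unfolding A_def[symmetric] B_def[symmetric] C_def[symmetric] S_def[symmetric]
  proof
    assume cp: "convex_position S"
    then have fr: "p \<in> frontier (convex hull S)" if "p \<in> S" for p
      using that by (auto simp: convex_position_def)
    have aS: "a \<in> S" "b \<in> S" "c \<in> S" unfolding S_def by auto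
    show "\<not> (A > 1/2 \<and> B < 1/2 \<and> C < 1/2) \<and> \<not> (B > 1/2 \<and> C < 1/2 \<and> A < 1/2) \<and>
      \<not> (C > 1/2 \<and> A < 1/2 \<and> B < 1/2)"
    proof (intro conjI notI)
      assume "A > 1/2 \<and> B < 1/2 \<and> C < 1/2"
      then have "a \<in> interior (convex hull S)"
        unfolding S_def using lem_int[OF ncol r1 s1] by blast
      then show False using notfr fr aS by blast
    next
      assume "B > 1/2 \<and> C < 1/2 \<and> A < 1/2"
      then have "b \<in> interior (convex hull S)"
        unfolding S2[symmetric] using lem_int[OF n2 r2 s2] by blast
      then show False using notfr fr aS by blast
    next
      assume "C > 1/2 \<and> A < 1/2 \<and> B < 1/2"
      then have "c \<in> interior (convex hull S)"
        unfolding S3[symmetric] using lem_int[OF n3 r3 s3] by blast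
      then show False using notfr fr aS by blast
    qed
  next
    assume h: "\<not> (A > 1/2 \<and> B < 1/2 \<and> C < 1/2) \<and> \<not> (B > 1/2 \<and> C < 1/2 \<and> A < 1/2) \<and>
      \<not> (C > 1/2 \<and> A < 1/2 \<and> B < 1/2)"
    have fa: "a \<in> frontier (convex hull S)" "2 *\<^sub>R O' - a \<in> frontier (convex hull S)"
      unfolding S_def using lem_fr[OF ncol r1 s1] h by auto
    have fb: "b \<in> frontier (convex hull S)" "2 *\<^sub>R O' - b \<in> frontier (convex hull S)"
      unfolding S2[symmetric] using lem_fr[OF n2 r2 s2] h by auto
    have fc: "c \<in> frontier (convex hull S)" "2 *\<^sub>R O' - c \<in> frontier (convex hull S)"
      unfolding S3[symmetric] using lem_fr[OF n3 r3 s3] h by auto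
    show "convex_position S"
      unfolding convex_position_def using fa fb fc unfolding S_def refl_set3 by auto
  qed
qed


definition PP :: "(bool \<times> bool \<times> bool) set" where
  "PP = {(False,False,False),(False,True,True),(True,False,True),(True,True,False),
         (True,False,False),(False,True,False),(False,False,True)}"

lemma PP_iff: "(s1,s2,s3) \<in> PP \<longleftrightarrow> \<not> (s1 \<and> s2 \<and> s3)"
  by (cases s1; cases s2; cases s3) (simp_all add: PP_def)

lemma card_PP: "card PP = 7" by (simp add: PP_def)

definition regf where "regf a b c = (\<lambda>(s1,s2,s3). reg a b c s1 s2 s3)"
definition cregf where "cregf a b c = (\<lambda>(s1,s2,s3). creg a b c s1 s2 s3)"

lemma reg_open: "open (reg a b c s1 s2 s3)"
proof -
  have "reg a b c s1 s2 s3 = {p. sg s1 (bcA a b c p)} \<inter> {p. sg s2 (bcB a b c p)} \<inter> {p. sg s3 (bcC a b c p)}"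
    by (auto simp: reg_def)
  then show ?thesis using open_sg cont_bc by (metis open_Int)
qed

lemma creg_closed: "closed (creg a b c s1 s2 s3)"
proof -
  have "creg a b c s1 s2 s3 = {p. csg s1 (bcA a b c p)} \<inter> {p. csg s2 (bcB a b c p)} \<inter> {p. csg s3 (bcC a b c p)}"
    by (auto simp: creg_def)
  then show ?thesis using closed_csg cont_bc by (metis closed_Int)
qed

context
  fixes a b c :: "real^2"
  assumes ncol: "\<not> collinear {a,b,c}"
begin

lemma D0: "cr (b-a) (c-a) \<noteq> 0" using ncol_cr[OF ncol] .

lemma reg_convex: "convex (reg a b c s1 s2 s3)"
proof (rule convexI)
  fix x y :: "real^2" and u v :: real assume "x \<in> reg a b c s1 s2 s3" "y \<in> reg a b c s1 s2 s3" and uv: "0 \<le> u" "0 \<le> v" "u + v = 1"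
  then show "u *\<^sub>R x + v *\<^sub>R y \<in> reg a b c s1 s2 s3"
    unfolding reg_def using bc_aff[OF D0 uv(3)] sg_comb[OF uv] by auto
qed

lemma reg_wit: assumes "x + y + z = 1" "sg s1 x" "sg s2 y" "sg s3 z"
  shows "reg a b c s1 s2 s3 \<noteq> {}"
proof -
  have "x *\<^sub>R a + y *\<^sub>R b + z *\<^sub>R c \<in> reg a b c s1 s2 s3"
    unfolding reg_def using bc_uniq[OF D0 assms(1) refl] assms by auto
  then show ?thesis by blast
qed

lemma reg_nonempty: assumes "s \<in> PP" shows "regf a b c s \<noteq> {}"
proof -
  obtain s1 s2 s3 where s: "s = (s1,s2,s3)" by (cases s) auto
  have n: "\<not> (s1 \<and> s2 \<and> s3)" using assms s PP_iff by simp
  have "reg a b c s1 s2 s3 \<noteq> {}"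
  proof (cases s1; cases s2; cases s3)
    assume "s1" "\<not> s2" "\<not> s3" then show ?thesis by (intro reg_wit[of 1 0 0]) (auto simp: sg_def)
  next
    assume "\<not> s1" "s2" "\<not> s3" then show ?thesis by (intro reg_wit[of 0 1 0]) (auto simp: sg_def)
  next
    assume "\<not> s1" "\<not> s2" "s3" then show ?thesis by (intro reg_wit[of 0 0 1]) (auto simp: sg_def)
  next
    assume "\<not> s1" "\<not> s2" "\<not> s3" then show ?thesis by (intro reg_wit[of "1/3" "1/3" "1/3"]) (auto simp: sg_def)
  next
    assume "\<not> s1" "s2" "s3" then show ?thesis by (intro reg_wit[of "-1" 1 1]) (auto simp: sg_def)
  next
    assume "s1" "\<not> s2" "s3" then show ?thesis by (intro reg_wit[of 1 "-1" 1]) (auto simp: sg_def)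
  next
    assume "s1" "s2" "\<not> s3" then show ?thesis by (intro reg_wit[of 1 1 "-1"]) (auto simp: sg_def)
  next
    assume "s1" "s2" "s3" then show ?thesis using n by simp
  qed
  then show ?thesis using s by (simp add: regf_def)
qed

lemma reg_closure: assumes "reg a b c s1 s2 s3 \<noteq> {}"
  shows "closure (reg a b c s1 s2 s3) = creg a b c s1 s2 s3"
proof
  show "closure (reg a b c s1 s2 s3) \<subseteq> creg a b c s1 s2 s3"
    by (rule closure_minimal[OF _ creg_closed]) (auto simp: reg_def creg_def sg_csg)
  obtain q where q: "q \<in> reg a b c s1 s2 s3" using assms by blast
  show "creg a b c s1 s2 s3 \<subseteq> closure (reg a b c s1 s2 s3)"
  proof
    fix p assume p: "p \<in> creg a b c s1 s2 s3"
    show "p \<in> closure (reg a b c s1 s2 s3)"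
    proof (rule closure_seg)
      fix t :: real assume t: "0 < t" "t \<le> 1"
      have tt: "(1 - t) + t = 1" by simp
      show "(1 - t) *\<^sub>R p + t *\<^sub>R q \<in> reg a b c s1 s2 s3"
        using p q csg_comb[OF t] by (auto simp: reg_def creg_def bc_aff[OF D0 tt])
    qed
  qed
qed

lemma reg_union: "\<Union>(regf a b c ` PP) = - midlines a b c"
proof (intro equalityI subsetI)
  fix p assume "p \<in> \<Union>(regf a b c ` PP)"
  then obtain s1 s2 s3 where "(s1,s2,s3) \<in> PP" "p \<in> reg a b c s1 s2 s3"
    by (auto simp: regf_def)
  then show "p \<in> - midlines a b c"
    unfolding midlines_eq[OF ncol] reg_def
    by (cases s1; cases s2; cases s3) (auto simp: sg_def)
next
  fix p assume "p \<in> - midlines a b c"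
  then have h: "bcA a b c p \<noteq> 1/2" "bcB a b c p \<noteq> 1/2" "bcC a b c p \<noteq> 1/2"
    unfolding midlines_eq[OF ncol] by auto
  define s1 where "s1 = (bcA a b c p > 1/2)"
  define s2 where "s2 = (bcB a b c p > 1/2)"
  define s3 where "s3 = (bcC a b c p > 1/2)"
  have "\<not> (s1 \<and> s2 \<and> s3)" unfolding s1_def s2_def s3_def using bcA_def by auto
  then have "(s1,s2,s3) \<in> PP" using PP_iff by simp
  moreover have "p \<in> reg a b c s1 s2 s3"
    unfolding reg_def s1_def s2_def s3_def using h by (auto simp: sg_def)
  ultimately show "p \<in> \<Union>(regf a b c ` PP)" by (force simp: regf_def)
qed

lemma reg_same: assumes "p \<in> regf a b c s" "p \<in> regf a b c s'" shows "s = s'"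
proof -
  obtain s1 s2 s3 where s: "s = (s1,s2,s3)" by (cases s) auto
  obtain t1 t2 t3 where t: "s' = (t1,t2,t3)" by (cases s') auto
  show ?thesis using assms unfolding s t regf_def reg_def using sg_unique by auto
qed

lemma comps: "components (- midlines a b c) = regf a b c ` PP"
proof (rule components_partition[OF reg_union])
  fix C assume "C \<in> regf a b c ` PP"
  then obtain s where s: "s \<in> PP" "C = regf a b c s" by blast
  obtain s1 s2 s3 where ss: "s = (s1,s2,s3)" by (cases s) auto
  have "connected (reg a b c s1 s2 s3)" by (rule convex_connected[OF reg_convex])
  then show "open C \<and> connected C \<and> C \<noteq> {}"
    using s reg_nonempty[OF s(1)] reg_open
    unfolding ss regf_def by auto
next
  fix C C' assume "C \<in> regf a b c ` PP" "C' \<in> regf a b c ` PP" "C \<noteq> C'"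
  then show "C \<inter> C' = {}" using reg_same by blast
qed

lemma card7: "card (components (- midlines a b c)) = 7"
proof -
  have "inj_on (regf a b c) PP"
  proof (rule inj_onI)
    fix s s' assume "s \<in> PP" "s' \<in> PP" "regf a b c s = regf a b c s'"
    then show "s = s'" using reg_nonempty reg_same by blast
  qed
  then show ?thesis unfolding comps using card_image card_PP by metis
qed

end


lemma final_logic:
  fixes A B C :: real
  assumes "A + B + C = 1"
  shows "(\<exists>s1 s2 s3. \<not> (s1 \<and> s2 \<and> s3) \<and> csg s1 A \<and> csg s2 B \<and> csg s3 C
      \<and> \<not> (csg s1 1 \<and> csg s2 0 \<and> csg s3 0) \<and> \<not> (csg s1 0 \<and> csg s2 1 \<and> csg s3 0)
      \<and> \<not> (csg s1 0 \<and> csg s2 0 \<and> csg s3 1))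
   \<longleftrightarrow> \<not> (A > 1/2 \<and> B < 1/2 \<and> C < 1/2) \<and> \<not> (B > 1/2 \<and> C < 1/2 \<and> A < 1/2)
      \<and> \<not> (C > 1/2 \<and> A < 1/2 \<and> B < 1/2)"
  using assms by (simp add: ex_bool_eq csg_def) linarith

theorem mainTheorem4:
  fixes a b c :: "real^2"
  assumes "\<not> collinear {a, b, c}"
  shows "card (components (- midlines a b c)) = 7
    \<and> admissible_centers {a, b, c} =
        \<Union> {closure C | C. C \<in> components (- midlines a b c)
                         \<and> a \<notin> closure C \<and> b \<notin> closure C \<and> c \<notin> closure C}"
proof
  note ncol = assms
  have D: "cr (b-a) (c-a) \<noteq> 0" using ncol_cr[OF ncol] .
  show "card (components (- midlines a b c)) = 7" by (rule card7[OF ncol])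
  have cl: "closure (regf a b c s) = cregf a b c s" if "s \<in> PP" for s
  proof -
    obtain s1 s2 s3 where s: "s = (s1,s2,s3)" by (cases s) auto
    show ?thesis using reg_closure[OF ncol] reg_nonempty[OF ncol that]
      unfolding s regf_def cregf_def by simp
  qed
  have mem: "x \<in> cregf a b c (s1,s2,s3) \<longleftrightarrow> csg s1 (bcA a b c x) \<and> csg s2 (bcB a b c x) \<and> csg s3 (bcC a b c x)"
    for x s1 s2 s3 by (simp add: cregf_def creg_def)
  show "admissible_centers {a, b, c} =
        \<Union> {closure C | C. C \<in> components (- midlines a b c)
                         \<and> a \<notin> closure C \<and> b \<notin> closure C \<and> c \<notin> closure C}"
  proof (rule set_eqI)
    fix O' :: "real^2"
    have "O' \<in> \<Union> {closure C | C. C \<in> components (- midlines a b c)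
                         \<and> a \<notin> closure C \<and> b \<notin> closure C \<and> c \<notin> closure C}
      \<longleftrightarrow> (\<exists>s\<in>PP. O' \<in> cregf a b c s \<and> a \<notin> cregf a b c s \<and> b \<notin> cregf a b c s \<and> c \<notin> cregf a b c s)"
      (is "?L \<longleftrightarrow> ?R")
    proof
      assume ?L
      then show ?R unfolding comps[OF ncol] using cl by auto
    next
      assume ?R
      then obtain s where s: "s \<in> PP" "O' \<in> cregf a b c s" "a \<notin> cregf a b c s"
        "b \<notin> cregf a b c s" "c \<notin> cregf a b c s" by blast
      have "closure (regf a b c s) \<in> {closure C | C. C \<in> components (- midlines a b c)
                         \<and> a \<notin> closure C \<and> b \<notin> closure C \<and> c \<notin> closure C}"
        unfolding comps[OF ncol] using s cl[OF s(1)] by blast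
      then show ?L using s(2) cl[OF s(1)] by blast
    qed
    also have "\<dots> \<longleftrightarrow> (\<exists>s1 s2 s3. \<not> (s1 \<and> s2 \<and> s3) \<and> csg s1 (bcA a b c O') \<and> csg s2 (bcB a b c O') \<and> csg s3 (bcC a b c O')
      \<and> \<not> (csg s1 1 \<and> csg s2 0 \<and> csg s3 0) \<and> \<not> (csg s1 0 \<and> csg s2 1 \<and> csg s3 0)
      \<and> \<not> (csg s1 0 \<and> csg s2 0 \<and> csg s3 1))"
    proof -
      have "(\<exists>s\<in>PP. Q s) \<longleftrightarrow> (\<exists>s1 s2 s3. (s1,s2,s3) \<in> PP \<and> Q (s1,s2,s3))" for Q by auto
      then show ?thesis unfolding PP_iff using bc_a[OF D] bc_b[OF D] bc_c[OF D] by (simp add: mem)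
    qed
    also have "\<dots> \<longleftrightarrow> convex_position ({a,b,c} \<union> reflect_set O' {a,b,c})"
      unfolding cp_char[OF ncol] by (rule final_logic) (simp add: bcA_def)
    finally show "O' \<in> admissible_centers {a, b, c} \<longleftrightarrow> O' \<in> \<Union> {closure C | C. C \<in> components (- midlines a b c)
                         \<and> a \<notin> closure C \<and> b \<notin> closure C \<and> c \<notin> closure C}"
      by (simp add: admissible_centers_def)
  qed
qed

end
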